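(* If the toric algebra $A_{\mathscr{E}}$ is consistent, then every arrow of $Q$ lies on some anticanonical cycle, and hence appears in a term of the superpotential $W=\sum_{p\text{ anticanonical}}p$.
   Context: Let $\mathbb{k}$ be an algebraically closed field and $X=\operatorname{Spec}R$ a normal affine toric variety of dimension $n$ with a torus-fixed point, $R=\mathbb{k}[\sigma^\vee\cap M]$, $\sigma\subset N\otimes\mathbb{R}$ strongly convex rational polyhedral. Let $\sigma(1)$ be the rays, $d=|\sigma(1)|$, $v_\rho$ primitive generators, $D_\rho$ toric prime divisors, torus-invariant divisors identified with $\mathbb{Z}^d$, $\deg:\mathbb{Z}^d\to\operatorname{Cl}(X)$ the class map. Cox ring $\mathbb{k}[x_\rho]$, $x^D=\prod x_\rho^{D_\rho}$. Assume $X$ is Gorenstein: $(1,\dots,1)\in\mathbb{Z}^d$ lies in the image of $M$ under $u\mapsto\sum\langle u,v_\rho\rangle D_\rho$. Let $\mathscr{E}=(E_0=\mathcal{O}_X,E_1,\dots,E_r)$ be pairwise distinct rank one reflexive sheaves, $E_i=\mathcal{O}_X(D_i')$, and $Q$ its quiver of sections: vertices $0,\dots,r$; an arrow $a:i\to j$ with label $\operatorname{div}(a)\in\mathbb{N}^d$ for each irreducible $T_M$-invariant section $x^{\operatorname{div}(a)}$ of $\operatorname{Hom}(E_i,E_j)\cong H^0(\mathcal{O}_X(D_j'-D_i'))$ (irreducible: not in the image of multiplication through any $E_k$, $k\neq i,j$). Paths compose right to left; $\operatorname{div}(p)$ is the sum of labels of arrows of $p$. $J_{\mathscr{E}}$ is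 generated by $p^+-p^-$ over pairs of paths with equal head, tail and label; $A_{\mathscr{E}}=\mathbb{k}Q/J_{\mathscr{E}}$. A cycle $p$ is anticanonical if $x^{\operatorname{div}(p)}=\prod_\rho x_\rho$; $W\in\mathbb{k}Q/[\mathbb{k}Q,\mathbb{k}Q]$ is the sum of all anticanonical cycles. For a path $q$, $\partial_qW$ is the sum of all paths $p$ such that $pq$ is an anticanonical cycle. $\mathscr{P}$ is the set of paths $q$ with $\partial_qW$ a sum of precisely two paths sharing neither initial nor final arrow; $J_W$ is generated by $p^+-p^-$ whenever $\partial_qW=p^++p^-$, $q\in\mathscr{P}$. $A_{\mathscr{E}}$ is consistent if $J_W=J_{\mathscr{E}}$. *)

theory Defs
  imports "HOL-Analysis.Analysis" "HOL-Computational_Algebra.Polynomial" "HOL-Library.Function_Algebras"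
begin

text \<open>Combinatorial model of a normal affine toric variety X = Spec k[sigma-dual cap M].
 The lattice N = M is 'n => int (with 'n a finite index type, n = CARD('n));
 the rays of sigma are indexed by a finite type 'r (d = CARD('r)), with primitive
 generators v rho. Torus-invariant Weil divisors are 'r => int (= Z^d).\<close>

definition pairing :: "('n::finite \<Rightarrow> int) \<Rightarrow> ('n \<Rightarrow> int) \<Rightarrow> int" where
  "pairing u w = (\<Sum>i\<in>UNIV. u i * w i)"

definition divM :: "('r \<Rightarrow> 'n::finite \<Rightarrow> int) \<Rightarrow> ('n \<Rightarrow> int) \<Rightarrow> ('r \<Rightarrow> int)" where
  "divM v u = (\<lambda>\<rho>. pairing u (v \<rho>))"

definition lin_equiv :: "('r \<Rightarrow> 'n::finite \<Rightarrow> int) \<Rightarrow> ('r \<Rightarrow> int) \<Rightarrow> ('r \<Rightarrow> int) \<Rightarrow> bool" where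
  "lin_equiv v A B \<longleftrightarrow> (\<exists>u. A - B = divM v u)"

definition realvec :: "('r \<Rightarrow> 'n::finite \<Rightarrow> int) \<Rightarrow> 'r \<Rightarrow> real ^ 'n" where
  "realvec v \<rho> = (\<chi> i. real_of_int (v \<rho> i))"

text \<open>v lists exactly the primitive ray generators of a strongly convex rational polyhedral
 cone sigma (the cone they generate) which is full dimensional (torus-fixed point).\<close>
definition toric_cone_rays :: "('r::finite \<Rightarrow> 'n::finite \<Rightarrow> int) \<Rightarrow> bool" where
  "toric_cone_rays v \<longleftrightarrow>
     inj v
   \<and> (\<forall>\<rho> (k::int). (\<forall>i. k dvd v \<rho> i) \<longrightarrow> is_unit k)
   \<and> (\<forall>\<rho>. \<not> (\<exists>c::'r \<Rightarrow> real. (\<forall>\<rho>'. c \<rho>' \<ge> 0) \<and>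
              realvec v \<rho> = (\<Sum>\<rho>'\<in>UNIV - {\<rho>}. c \<rho>' *\<^sub>R realvec v \<rho>')))
   \<and> (\<forall>c::'r \<Rightarrow> real. (\<forall>\<rho>. c \<rho> \<ge> 0) \<and> (\<Sum>\<rho>\<in>UNIV. c \<rho> *\<^sub>R realvec v \<rho>) = 0
          \<longrightarrow> (\<forall>\<rho>. c \<rho> = 0))
   \<and> span (range (realvec v)) = UNIV"

definition gorenstein :: "('r \<Rightarrow> 'n::finite \<Rightarrow> int) \<Rightarrow> bool" where
  "gorenstein v \<longleftrightarrow> (\<exists>u. divM v u = (\<lambda>_. 1))"

definition alg_closed_field :: "'k::field itself \<Rightarrow> bool" where
  "alg_closed_field _ \<longleftrightarrow> (\<forall>p::'k poly. degree p > 0 \<longrightarrow> (\<exists>x. poly p x = 0))"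

text \<open>T_M-invariant sections of Hom(O(A),O(B)) = H^0(O(B-A)) are the monomials x^E with
 E in N^d effective and linearly equivalent to B - A.\<close>
definition is_section :: "('r \<Rightarrow> 'n::finite \<Rightarrow> int) \<Rightarrow> ('r \<Rightarrow> int) \<Rightarrow> ('r \<Rightarrow> int) \<Rightarrow> ('r \<Rightarrow> nat) \<Rightarrow> bool" where
  "is_section v A B E \<longleftrightarrow> lin_equiv v (\<lambda>\<rho>. int (E \<rho>)) (B - A)"

text \<open>Collection E_i = O(D i), i = 0..r. Irreducible sections (nonzero label; the identity
 section is the trivial path, not an arrow).\<close>
definition irreducible_sec ::
  "('r \<Rightarrow> 'n::finite \<Rightarrow> int) \<Rightarrow> (nat \<Rightarrow> 'r \<Rightarrow> int) \<Rightarrow> nat \<Rightarrow> nat \<Rightarrow> nat \<Rightarrow> ('r \<Rightarrow> nat) \<Rightarrow> bool" where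
  "irreducible_sec v D r i j E \<longleftrightarrow>
     E \<noteq> 0 \<and> is_section v (D i) (D j) E \<and>
     \<not> (\<exists>k\<le>r. k \<noteq> i \<and> k \<noteq> j \<and> (\<exists>E1 E2. is_section v (D i) (D k) E1 \<and>
                   is_section v (D k) (D j) E2 \<and> E = E1 + E2))"

type_synonym 'r arrow = "nat \<times> nat \<times> ('r \<Rightarrow> nat)"   (* (tail, head, label) *)
type_synonym 'r qpath = "nat \<times> 'r arrow list"        (* (tail vertex, arrows in order traversed) *)

definition arrows :: "('r \<Rightarrow> 'n::finite \<Rightarrow> int) \<Rightarrow> (nat \<Rightarrow> 'r \<Rightarrow> int) \<Rightarrow> nat \<Rightarrow> 'r arrow set" where
  "arrows v D r = {(i, j, E). i \<le> r \<and> j \<le> r \<and> irreducible_sec v D r i j E}"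

fun chain :: "'r arrow set \<Rightarrow> nat \<Rightarrow> 'r arrow list \<Rightarrow> bool" where
  "chain A s [] = True"
| "chain A s ((i, j, E) # as) = (i = s \<and> (i, j, E) \<in> A \<and> chain A j as)"

fun endv :: "nat \<Rightarrow> 'r arrow list \<Rightarrow> nat" where
  "endv s [] = s"
| "endv s ((i, j, E) # as) = endv j as"

definition is_path :: "('r \<Rightarrow> 'n::finite \<Rightarrow> int) \<Rightarrow> (nat \<Rightarrow> 'r \<Rightarrow> int) \<Rightarrow> nat \<Rightarrow> 'r qpath \<Rightarrow> bool" where
  "is_path v D r p \<longleftrightarrow> fst p \<le> r \<and> chain (arrows v D r) (fst p) (snd p)"

definition ptail :: "'r qpath \<Rightarrow> nat" where "ptail p = fst p"
definition phead :: "'r qpath \<Rightarrow> nat" where "phead p = endv (fst p) (snd p)"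

definition pdiv :: "'r qpath \<Rightarrow> ('r \<Rightarrow> nat)" where
  "pdiv p = sum_list (map (\<lambda>(i, j, E). E) (snd p))"

text \<open>pcomp p q is the path "p q": first q, then p (composition right to left).\<close>
definition pcomp :: "'r qpath \<Rightarrow> 'r qpath \<Rightarrow> 'r qpath" where
  "pcomp p q = (ptail q, snd q @ snd p)"

definition anticanonical :: "('r \<Rightarrow> 'n::finite \<Rightarrow> int) \<Rightarrow> (nat \<Rightarrow> 'r \<Rightarrow> int) \<Rightarrow> nat \<Rightarrow> 'r qpath \<Rightarrow> bool" where
  "anticanonical v D r p \<longleftrightarrow> is_path v D r p \<and> phead p = ptail p \<and> pdiv p = (\<lambda>_. 1)"

text \<open>The set of paths p occurring in the formal sum partial_q W: pq is an anticanonical cycle.\<close>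
definition dW :: "('r \<Rightarrow> 'n::finite \<Rightarrow> int) \<Rightarrow> (nat \<Rightarrow> 'r \<Rightarrow> int) \<Rightarrow> nat \<Rightarrow> 'r qpath \<Rightarrow> 'r qpath set" where
  "dW v D r q = {p. is_path v D r p \<and> ptail p = phead q \<and> anticanonical v D r (pcomp p q)}"

text \<open>partial_q W = p1 + p2 with p1, p2 sharing neither initial nor final arrow.\<close>
definition two_term :: "('r \<Rightarrow> 'n::finite \<Rightarrow> int) \<Rightarrow> (nat \<Rightarrow> 'r \<Rightarrow> int) \<Rightarrow> nat \<Rightarrow> 'r qpath \<Rightarrow> 'r qpath \<Rightarrow> 'r qpath \<Rightarrow> bool" where
  "two_term v D r q p1 p2 \<longleftrightarrow> is_path v D r q \<and> dW v D r q = {p1, p2} \<and> p1 \<noteq> p2 \<and>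
     snd p1 \<noteq> [] \<and> snd p2 \<noteq> [] \<and> hd (snd p1) \<noteq> hd (snd p2) \<and> last (snd p1) \<noteq> last (snd p2)"

text \<open>Path algebra kQ: elements are (finitely supported) functions from paths to k;
 basis vector of a path, and left/right multiplication by a path.\<close>
definition bvec :: "'r qpath \<Rightarrow> ('r qpath \<Rightarrow> 'k::field)" where
  "bvec p = (\<lambda>w. if w = p then 1 else 0)"

definition lmult :: "'r qpath \<Rightarrow> ('r qpath \<Rightarrow> 'k::field) \<Rightarrow> ('r qpath \<Rightarrow> 'k)" where
  "lmult u f = (\<lambda>w. if (\<exists>p. phead p = ptail u \<and> w = pcomp u p)
                    then f (THE p. phead p = ptail u \<and> w = pcomp u p) else 0)"

definition rmult :: "('r qpath \<Rightarrow> 'k::field) \<Rightarrow> 'r qpath \<Rightarrow> ('r qpath \<Rightarrow> 'k)" where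
  "rmult f u = (\<lambda>w. if (\<exists>p. phead u = ptail p \<and> w = pcomp p u)
                    then f (THE p. phead u = ptail p \<and> w = pcomp p u) else 0)"

inductive_set ideal_gen :: "('r qpath \<Rightarrow> bool) \<Rightarrow> ('r qpath \<Rightarrow> 'k::field) set \<Rightarrow> ('r qpath \<Rightarrow> 'k) set"
  for P G where
  gen: "g \<in> G \<Longrightarrow> g \<in> ideal_gen P G"
| zero: "0 \<in> ideal_gen P G"
| add: "f \<in> ideal_gen P G \<Longrightarrow> h \<in> ideal_gen P G \<Longrightarrow> f + h \<in> ideal_gen P G"
| smult: "f \<in> ideal_gen P G \<Longrightarrow> (\<lambda>w. c * f w) \<in> ideal_gen P G"
| lmult: "f \<in> ideal_gen P G \<Longrightarrow> P u \<Longrightarrow> lmult u f \<in> ideal_gen P G"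
| rmult: "f \<in> ideal_gen P G \<Longrightarrow> P u \<Longrightarrow> rmult f u \<in> ideal_gen P G"

definition J_E :: "'k::field itself \<Rightarrow> ('r \<Rightarrow> 'n::finite \<Rightarrow> int) \<Rightarrow> (nat \<Rightarrow> 'r \<Rightarrow> int) \<Rightarrow> nat \<Rightarrow> ('r qpath \<Rightarrow> 'k) set" where
  "J_E _ v D r = ideal_gen (is_path v D r)
     {bvec p - bvec p' | p p'. is_path v D r p \<and> is_path v D r p' \<and> ptail p = ptail p' \<and>
                             phead p = phead p' \<and> pdiv p = pdiv p'}"

definition J_W :: "'k::field itself \<Rightarrow> ('r \<Rightarrow> 'n::finite \<Rightarrow> int) \<Rightarrow> (nat \<Rightarrow> 'r \<Rightarrow> int) \<Rightarrow> nat \<Rightarrow> ('r qpath \<Rightarrow> 'k) set" where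
  "J_W _ v D r = ideal_gen (is_path v D r)
     {bvec p1 - bvec p2 | q p1 p2. two_term v D r q p1 p2}"

definition consistent :: "'k::field itself \<Rightarrow> ('r \<Rightarrow> 'n::finite \<Rightarrow> int) \<Rightarrow> (nat \<Rightarrow> 'r \<Rightarrow> int) \<Rightarrow> nat \<Rightarrow> bool" where
  "consistent K v D r \<longleftrightarrow> J_W K v D r = J_E K v D r"

end

theory Submission
  imports Defs
begin

lemma endv_append: "endv s (xs @ ys) = endv (endv s xs) ys"
  by (induction s xs rule: endv.induct) auto

lemma chain_append: "chain A s (xs @ ys) \<longleftrightarrow> chain A s xs \<and> chain A (endv s xs) ys"
  by (induction A s xs rule: chain.induct) auto

lemma pcomp_tail[simp]: "ptail (pcomp p q) = ptail q"
  by (simp add: pcomp_def ptail_def)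

lemma pcomp_head[simp]: "ptail p = phead q \<Longrightarrow> phead (pcomp p q) = phead p"
  by (simp add: pcomp_def ptail_def phead_def endv_append)

lemma pcomp_set[simp]: "set (snd (pcomp p q)) = set (snd q) \<union> set (snd p)"
  by (simp add: pcomp_def)

lemma pcomp_div: "pdiv (pcomp p q) = pdiv q + pdiv p"
  by (simp add: pcomp_def pdiv_def)

lemma pcomp_inj1: "pcomp u p = pcomp u p' \<Longrightarrow> p = p'"
  by (cases p; cases p') (auto simp: pcomp_def ptail_def)

lemma pcomp_inj2: "pcomp p u = pcomp p' u \<Longrightarrow> ptail p = ptail p' \<Longrightarrow> p = p'"
  by (cases p; cases p') (auto simp: pcomp_def ptail_def)

lemma lmult_at: "phead p = ptail u \<Longrightarrow> lmult u f (pcomp u p) = f p"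
proof -
  assume h: "phead p = ptail u"
  have "(THE p'. phead p' = ptail u \<and> pcomp u p = pcomp u p') = p"
    using h pcomp_inj1[of u p] by (intro the_equality) (auto dest: pcomp_inj1)
  moreover have ex: "\<exists>p'. phead p' = ptail u \<and> pcomp u p = pcomp u p'" using h by blast
  ultimately show ?thesis unfolding lmult_def by (simp only: if_P[OF ex] if_True)
qed

lemma lmult_out: "w \<notin> pcomp u ` {p. phead p = ptail u} \<Longrightarrow> lmult u f w = 0"
  unfolding lmult_def by auto

lemma rmult_at: "phead u = ptail p \<Longrightarrow> rmult f u (pcomp p u) = f p"
proof -
  assume h: "phead u = ptail p"
  have "(THE p'. phead u = ptail p' \<and> pcomp p u = pcomp p' u) = p"
    using h by (intro the_equality) (auto dest: pcomp_inj2)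
  moreover have ex: "\<exists>p'. phead u = ptail p' \<and> pcomp p u = pcomp p' u" using h by blast
  ultimately show ?thesis unfolding rmult_def by (simp only: if_P[OF ex] if_True)
qed

lemma rmult_out: "w \<notin> (\<lambda>p. pcomp p u) ` {p. ptail p = phead u} \<Longrightarrow> rmult f u w = 0"
  unfolding rmult_def by auto

definition Rst :: "'r arrow \<Rightarrow> nat \<Rightarrow> nat \<Rightarrow> 'r qpath \<Rightarrow> bool" where
  "Rst a s t w \<longleftrightarrow> a \<notin> set (snd w) \<and> ptail w = s \<and> phead w = t"

definition ssum :: "('r qpath \<Rightarrow> bool) \<Rightarrow> ('r qpath \<Rightarrow> 'k::field) \<Rightarrow> 'k" where
  "ssum R f = sum f {w. f w \<noteq> 0 \<and> R w}"

definition invar :: "'r arrow \<Rightarrow> ('r qpath \<Rightarrow> 'k::field) \<Rightarrow> bool" where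
  "invar a f \<longleftrightarrow> finite {w. f w \<noteq> 0} \<and> (\<forall>s t. ssum (Rst a s t) f = 0)"

lemma ssum_super: "finite A \<Longrightarrow> {w. f w \<noteq> 0} \<subseteq> A \<Longrightarrow> ssum R f = sum f {w\<in>A. R w}"
  unfolding ssum_def by (rule sum.mono_neutral_left) auto

lemma invar_ideal:
  assumes H: "\<forall>p. anticanonical v D r p \<longrightarrow> a \<notin> set (snd p)"
  and f: "f \<in> ideal_gen P {bvec p1 - bvec p2 | q p1 p2. two_term v D r q p1 p2}"
  shows "invar a f"
  using f
proof induction
  case (gen g)
  then obtain q p1 p2 where g: "g = bvec p1 - bvec p2" and tt: "two_term v D r q p1 p2" by blast
  have d: "p1 \<in> dW v D r q" "p2 \<in> dW v D r q" "p1 \<noteq> p2" using tt unfolding two_term_def by auto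
  have props: "a \<notin> set (snd p) \<and> ptail p = phead q \<and> phead p = ptail q" if "p \<in> dW v D r q" for p
  proof -
    have ac: "anticanonical v D r (pcomp p q)" and pt: "ptail p = phead q"
      using that unfolding dW_def by auto
    have "a \<notin> set (snd (pcomp p q))" using H ac by blast
    moreover have "phead p = ptail q" using ac pt unfolding anticanonical_def by simp
    ultimately show ?thesis using pt by simp
  qed
  have sup: "{w. g w \<noteq> 0} \<subseteq> {p1, p2}" by (auto simp: g bvec_def)
  have "ssum (Rst a s t) g = 0" for s t
  proof -
    have "ssum (Rst a s t) g = sum g {w\<in>{p1,p2}. Rst a s t w}"
      by (rule ssum_super[OF _ sup]) auto
    moreover have "Rst a s t p1 \<longleftrightarrow> Rst a s t p2" using props[OF d(1)] props[OF d(2)]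
      by (simp add: Rst_def)
    moreover have "sum g {w\<in>{p1,p2}. Rst a s t w} = 0"
    proof (cases "Rst a s t p1")
      case True
      then have "{w\<in>{p1,p2}. Rst a s t w} = {p1,p2}" using \<open>Rst a s t p1 \<longleftrightarrow> Rst a s t p2\<close> by auto
      then show ?thesis using d(3) by (simp add: g bvec_def)
    next
      case False
      then have "{w\<in>{p1,p2}. Rst a s t w} = {}" using \<open>Rst a s t p1 \<longleftrightarrow> Rst a s t p2\<close> by auto
      then show ?thesis by (metis sum.empty)
    qed
    ultimately show ?thesis by simp
  qed
  then show ?case using sup unfolding invar_def by (auto intro: finite_subset)
next
  case zero
  then show ?case by (simp add: invar_def ssum_def)
next
  case (add f h)
  let ?S = "{w. f w \<noteq> 0} \<union> {w. h w \<noteq> 0}"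
  have fin: "finite ?S" using add unfolding invar_def by auto
  have sup: "{w. (f + h) w \<noteq> 0} \<subseteq> ?S" by auto
  have "ssum (Rst a s t) (f + h) = 0" for s t
  proof -
    have "ssum (Rst a s t) (f + h) = sum (f + h) {w\<in>?S. Rst a s t w}"
      by (rule ssum_super[OF fin sup])
    also have "\<dots> = sum f {w\<in>?S. Rst a s t w} + sum h {w\<in>?S. Rst a s t w}"
      by (simp add: sum.distrib)
    also have "sum f {w\<in>?S. Rst a s t w} = ssum (Rst a s t) f"
      by (rule ssum_super[symmetric]) (use fin in auto)
    also have "sum h {w\<in>?S. Rst a s t w} = ssum (Rst a s t) h"
      by (rule ssum_super[symmetric]) (use fin in auto)
    finally show ?thesis using add unfolding invar_def by (simp add: plus_fun_def)
  qed
  then show ?case using fin sup unfolding invar_def by (auto intro: finite_subset)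
next
  case (smult f c)
  let ?S = "{w. f w \<noteq> 0}"
  have fin: "finite ?S" using smult unfolding invar_def by auto
  have sup: "{w. c * f w \<noteq> 0} \<subseteq> ?S" by auto
  have "ssum (Rst a s t) (\<lambda>w. c * f w) = 0" for s t
  proof -
    have "ssum (Rst a s t) (\<lambda>w. c * f w) = sum (\<lambda>w. c * f w) {w\<in>?S. Rst a s t w}"
      by (rule ssum_super[OF fin sup])
    also have "\<dots> = c * sum f {w\<in>?S. Rst a s t w}" by (simp add: sum_distrib_left)
    also have "sum f {w\<in>?S. Rst a s t w} = ssum (Rst a s t) f"
      by (rule ssum_super[symmetric]) (use fin in auto)
    finally show ?thesis using smult unfolding invar_def by simp
  qed
  then show ?case using fin sup unfolding invar_def by (auto intro: finite_subset)
next
  case (lmult f u)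
  let ?U = "{p. f p \<noteq> 0 \<and> phead p = ptail u}"
  have fin0: "finite {w. f w \<noteq> 0}" using lmult unfolding invar_def by auto
  have finU: "finite ?U" by (rule finite_subset[OF _ fin0]) auto
  have sup: "{w. lmult u f w \<noteq> 0} \<subseteq> pcomp u ` ?U"
  proof
    fix w assume w: "w \<in> {w. lmult u f w \<noteq> 0}"
    then have "w \<in> pcomp u ` {p. phead p = ptail u}" using lmult_out by fastforce
    then obtain p where p: "phead p = ptail u" "w = pcomp u p" by auto
    have "f p \<noteq> 0" using w p lmult_at[OF p(1), of f] by simp
    then show "w \<in> pcomp u ` ?U" using p by blast
  qed
  have inj: "inj_on (pcomp u) A" for A by (auto intro: inj_onI pcomp_inj1)
  have fin: "finite (pcomp u ` ?U)" using finU by simp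
  have "ssum (Rst a s t) (lmult u f) = 0" for s t
  proof -
    have "ssum (Rst a s t) (lmult u f) = sum (lmult u f) {w\<in>pcomp u ` ?U. Rst a s t w}"
      by (rule ssum_super[OF fin sup])
    also have "{w\<in>pcomp u ` ?U. Rst a s t w} = pcomp u ` {p\<in>?U. Rst a s t (pcomp u p)}"
      by auto
    also have "sum (lmult u f) \<dots> = sum (\<lambda>p. lmult u f (pcomp u p)) {p\<in>?U. Rst a s t (pcomp u p)}"
      using sum.reindex[OF inj] by (simp add: comp_def)
    also have "\<dots> = sum f {p\<in>?U. Rst a s t (pcomp u p)}"
      by (rule sum.cong) (auto simp: lmult_at)
    also have "\<dots> = 0"
    proof (cases "a \<notin> set (snd u) \<and> phead u = t")
      case True
      have "{p\<in>?U. Rst a s t (pcomp u p)} = {w. f w \<noteq> 0 \<and> Rst a s (ptail u) w}"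
        using True by (auto simp: Rst_def)
      then show ?thesis using lmult unfolding invar_def ssum_def by simp
    next
      case False
      have "{p\<in>?U. Rst a s t (pcomp u p)} = {}"
        using False by (auto simp: Rst_def)
      then show ?thesis by (metis sum.empty)
    qed
    finally show ?thesis .
  qed
  then show ?case using fin sup unfolding invar_def by (auto intro: finite_subset)
next
  case (rmult f u)
  let ?U = "{p. f p \<noteq> 0 \<and> ptail p = phead u}"
  have fin0: "finite {w. f w \<noteq> 0}" using rmult unfolding invar_def by auto
  have finU: "finite ?U" by (rule finite_subset[OF _ fin0]) auto
  have sup: "{w. rmult f u w \<noteq> 0} \<subseteq> (\<lambda>p. pcomp p u) ` ?U"
  proof
    fix w assume w: "w \<in> {w. rmult f u w \<noteq> 0}"
    then have "w \<in> (\<lambda>p. pcomp p u) ` {p. ptail p = phead u}" using rmult_out by fastforce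
    then obtain p where p: "ptail p = phead u" "w = pcomp p u" by auto
    have "f p \<noteq> 0" using w p rmult_at[of u p f] by simp
    then show "w \<in> (\<lambda>p. pcomp p u) ` ?U" using p by blast
  qed
  have inj: "inj_on (\<lambda>p. pcomp p u) ?U"
  proof (rule inj_onI)
    fix x y assume "x \<in> ?U" "y \<in> ?U" "pcomp x u = pcomp y u"
    then show "x = y" by (auto intro: pcomp_inj2[of x u y])
  qed
  have fin: "finite ((\<lambda>p. pcomp p u) ` ?U)" using finU by simp
  have "ssum (Rst a s t) (rmult f u) = 0" for s t
  proof -
    have "ssum (Rst a s t) (rmult f u) = sum (rmult f u) {w\<in>(\<lambda>p. pcomp p u) ` ?U. Rst a s t w}"
      by (rule ssum_super[OF fin sup])
    also have "{w\<in>(\<lambda>p. pcomp p u) ` ?U. Rst a s t w} = (\<lambda>p. pcomp p u) ` {p\<in>?U. Rst a s t (pcomp p u)}"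
      by auto
    also have "sum (rmult f u) \<dots> = sum (\<lambda>p. rmult f u (pcomp p u)) {p\<in>?U. Rst a s t (pcomp p u)}"
      by (rule sum.reindex_cong[OF inj_on_subset[OF inj]]) auto
    also have "\<dots> = sum f {p\<in>?U. Rst a s t (pcomp p u)}"
      by (rule sum.cong) (auto simp: rmult_at)
    also have "\<dots> = 0"
    proof (cases "a \<notin> set (snd u) \<and> ptail u = s")
      case True
      have "{p\<in>?U. Rst a s t (pcomp p u)} = {w. f w \<noteq> 0 \<and> Rst a (phead u) t w}"
        using True by (auto simp: Rst_def)
      then show ?thesis using rmult unfolding invar_def ssum_def by simp
    next
      case False
      have "{p\<in>?U. Rst a s t (pcomp p u)} = {}"
        using False by (auto simp: Rst_def)
      then show ?thesis by (metis sum.empty)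
    qed
    finally show ?thesis .
  qed
  then show ?case using fin sup unfolding invar_def by (auto intro: finite_subset)
qed


lemma pairing_lin: "pairing (\<lambda>k. c * x k - y k) w = c * pairing x w - pairing y w"
  unfolding pairing_def by (simp add: algebra_simps sum_subtractf sum_distrib_left)

lemma is_path_pcomp:
  assumes "is_path v D r p" "is_path v D r q" "ptail p = phead q"
  shows "is_path v D r (pcomp p q)"
  using assms unfolding is_path_def pcomp_def ptail_def phead_def
  by (simp add: chain_append)

lemma sec_zero:
  assumes "is_section v A B 0" shows "lin_equiv v B A"
proof -
  obtain u where "(\<lambda>\<rho>. int (0 \<rho>)) - (B - A) = divM v u"
    using assms unfolding is_section_def lin_equiv_def by blast
  then have "B - A = divM v (\<lambda>k. - u k)"
  proof -
    assume h: "(\<lambda>\<rho>. int (0 \<rho>)) - (B - A) = divM v u"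
    show ?thesis
    proof
      fix x
      have "0 - (B x - A x) = divM v u x" using fun_cong[OF h, of x] by simp
      then show "(B - A) x = divM v (\<lambda>k. - u k) x"
        by (simp add: divM_def pairing_def sum_negf)
    qed
  qed
  then show ?thesis unfolding lin_equiv_def by blast
qed

lemma factor:
  fixes v :: "'r::finite \<Rightarrow> 'n::finite \<Rightarrow> int"
  assumes distinct: "\<forall>i\<le>r. \<forall>j\<le>r. i \<noteq> j \<longrightarrow> \<not> lin_equiv v (D i) (D j)"
  shows "i \<le> r \<Longrightarrow> j \<le> r \<Longrightarrow> is_section v (D i) (D j) E \<Longrightarrow>
     \<exists>p. is_path v D r p \<and> ptail p = i \<and> phead p = j \<and> pdiv p = E"
proof (induction "sum E UNIV" arbitrary: i j E rule: less_induct)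
  case less
  show ?case
  proof (cases "E = 0")
    case True
    then have "lin_equiv v (D j) (D i)" using less sec_zero by blast
    then have "i = j" using distinct less by metis
    then show ?thesis using less True
      by (intro exI[of _ "(i, [])"]) (auto simp: is_path_def ptail_def phead_def pdiv_def)
  next
    case E0: False
    show ?thesis
    proof (cases "irreducible_sec v D r i j E")
      case True
      then show ?thesis using less
        by (intro exI[of _ "(i, [(i, j, E)])"])
           (auto simp: is_path_def ptail_def phead_def pdiv_def arrows_def)
    next
      case False
      then obtain k E1 E2 where k: "k \<le> r" "k \<noteq> i" "k \<noteq> j"
        and s1: "is_section v (D i) (D k) E1" and s2: "is_section v (D k) (D j) E2"
        and EE: "E = E1 + E2"
        using E0 less unfolding irreducible_sec_def by blast
      have n1: "E1 \<noteq> 0"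
      proof
        assume "E1 = 0"
        then have "lin_equiv v (D k) (D i)" using s1 sec_zero by blast
        then show False using distinct k less by metis
      qed
      have n2: "E2 \<noteq> 0"
      proof
        assume "E2 = 0"
        then have "lin_equiv v (D j) (D k)" using s2 sec_zero by blast
        then show False using distinct k less by metis
      qed
      have pos: "sum F UNIV > 0" if "F \<noteq> (0::'r \<Rightarrow> nat)" for F
      proof -
        have "\<exists>x. F x \<noteq> 0" using that by (auto simp: fun_eq_iff)
        then obtain x where "F x \<noteq> 0" by blast
        then have "F x \<le> sum F UNIV" by (intro member_le_sum) auto
        then show ?thesis using \<open>F x \<noteq> 0\<close> by simp
      qed
      have sE: "sum E UNIV = sum E1 UNIV + sum E2 UNIV" by (simp add: EE sum.distrib)
      have "sum E1 UNIV < sum E UNIV" "sum E2 UNIV < sum E UNIV"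
        using pos[OF n1] pos[OF n2] sE by auto
      then obtain p1 p2 where p1: "is_path v D r p1" "ptail p1 = i" "phead p1 = k" "pdiv p1 = E1"
        and p2: "is_path v D r p2" "ptail p2 = k" "phead p2 = j" "pdiv p2 = E2"
        using less.hyps less.prems k s1 s2 by metis
      have "is_path v D r (pcomp p2 p1)" by (rule is_path_pcomp) (use p1 p2 in auto)
      then show ?thesis
        by (intro exI[of _ "pcomp p2 p1"])
           (use p1 p2 EE in \<open>auto simp: pcomp_div add.commute\<close>)
    qed
  qed
qed


lemma powers:
  assumes om: "is_path v D r om" "ptail om = i" "phead om = i" "pdiv om = (\<lambda>_. 1)"
    "a \<notin> set (snd om)" and i: "i \<le> r"
  shows "is_path v D r (i, concat (replicate k (snd om))) \<and> phead (i, concat (replicate k (snd om))) = i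
     \<and> pdiv (i, concat (replicate k (snd om))) = (\<lambda>_. k) \<and> a \<notin> set (concat (replicate k (snd om)))"
proof (induction k)
  case 0
  then show ?case using i by (auto simp: is_path_def phead_def pdiv_def)
next
  case (Suc k)
  let ?p = "(i, concat (replicate k (snd om)))"
  have eq: "(i, concat (replicate (Suc k) (snd om))) = pcomp ?p om"
    using om by (simp add: pcomp_def ptail_def)
  have "is_path v D r (pcomp ?p om)" by (rule is_path_pcomp) (use Suc om in \<open>auto simp: ptail_def\<close>)
  moreover have "phead (pcomp ?p om) = i" using Suc om by (simp add: ptail_def)
  moreover have "pdiv (pcomp ?p om) = (\<lambda>_. Suc k)" using Suc om by (simp add: pcomp_div fun_eq_iff)
  ultimately show ?case using eq Suc om by auto
qed

theorem corollary3p7: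
  fixes v :: "'r::finite \<Rightarrow> 'n::finite \<Rightarrow> int"
    and D :: "nat \<Rightarrow> 'r \<Rightarrow> int"
    and r :: nat
  assumes field: "alg_closed_field TYPE('k::field)"
    and cone: "toric_cone_rays v"
    and gor: "gorenstein v"
    and E0: "lin_equiv v (D 0) 0"
    and distinct: "\<forall>i\<le>r. \<forall>j\<le>r. i \<noteq> j \<longrightarrow> \<not> lin_equiv v (D i) (D j)"
    and cons: "consistent TYPE('k) v D r"
  shows "\<forall>a \<in> arrows v D r. \<exists>p. anticanonical v D r p \<and> a \<in> set (snd p)"
proof (rule ccontr)
  assume "\<not> ?thesis"
  then obtain a where aA: "a \<in> arrows v D r"
    and H: "\<forall>p. anticanonical v D r p \<longrightarrow> a \<notin> set (snd p)" by blast
  obtain i j E where a: "a = (i, j, E)" by (cases a) auto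
  have ij: "i \<le> r" "j \<le> r" and irr: "irreducible_sec v D r i j E"
    using aA a by (auto simp: arrows_def)
  have secE: "is_section v (D i) (D j) E" using irr by (simp add: irreducible_sec_def)
  obtain u0 where u0: "divM v u0 = (\<lambda>_. 1)" using gor by (auto simp: gorenstein_def)
  obtain u1 where u1: "(\<lambda>\<rho>. int (E \<rho>)) - (D j - D i) = divM v u1"
    using secE by (auto simp: is_section_def lin_equiv_def)
  define m where "m = Max (range E) + 1"
  have Em: "E \<rho> < m" for \<rho> unfolding m_def by (simp add: le_imp_less_Suc)
  define F where "F = (\<lambda>\<rho>. m - E \<rho>)"
  have secF: "is_section v (D j) (D i) F"
  proof -
    have "(\<lambda>\<rho>. int (F \<rho>)) - (D i - D j) = divM v (\<lambda>k. int m * u0 k - u1 k)"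
    proof
      fix \<rho>
      have a1: "pairing u0 (v \<rho>) = 1" using fun_cong[OF u0, of \<rho>] by (simp add: divM_def)
      have a2: "int (E \<rho>) - (D j \<rho> - D i \<rho>) = pairing u1 (v \<rho>)"
        using fun_cong[OF u1, of \<rho>] by (simp add: divM_def)
      have "int (F \<rho>) = int m - int (E \<rho>)" using Em[of \<rho>] by (simp add: F_def of_nat_diff)
      then show "((\<lambda>\<rho>. int (F \<rho>)) - (D i - D j)) \<rho> = divM v (\<lambda>k. int m * u0 k - u1 k) \<rho>"
        using a1 a2 by (simp add: divM_def pairing_lin)
    qed
    then show ?thesis by (auto simp: is_section_def lin_equiv_def)
  qed
  obtain b where b: "is_path v D r b" "ptail b = j" "phead b = i" "pdiv b = F"
    using factor[OF distinct ij(2) ij(1) secF] by blast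
  have pa: "is_path v D r (i, [a])" using aA a ij by (simp add: is_path_def)
  define c where "c = pcomp b (i, [a])"
  have c: "is_path v D r c" "ptail c = i" "phead c = i" "pdiv c = (\<lambda>_. m)" "a \<in> set (snd c)"
  proof -
    show "is_path v D r c" unfolding c_def
      by (rule is_path_pcomp[OF b(1) pa]) (simp add: b a phead_def)
    show "ptail c = i" by (simp add: c_def ptail_def pcomp_def)
    have "ptail b = phead (i, [a])" by (simp add: b(2) a phead_def)
    from pcomp_head[OF this] show "phead c = i" using b(3) by (simp add: c_def)
    have "pdiv (i, [a]) = E" by (simp add: pdiv_def a)
    then have "pdiv c = E + F" by (simp add: c_def pcomp_div b)
    then show "pdiv c = (\<lambda>_. m)" using Em by (auto simp: F_def fun_eq_iff less_imp_le)
    show "a \<in> set (snd c)" by (simp add: c_def)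
  qed
  have sec1: "is_section v (D i) (D i) (\<lambda>_. 1)"
    using u0 unfolding is_section_def lin_equiv_def by (intro exI[of _ u0]) auto
  obtain om where om: "is_path v D r om" "ptail om = i" "phead om = i" "pdiv om = (\<lambda>_. 1)"
    using factor[OF distinct ij(1) ij(1) sec1] by blast
  have "anticanonical v D r om" using om by (simp add: anticanonical_def)
  then have aom: "a \<notin> set (snd om)" using H by blast
  define w where "w = (i, concat (replicate m (snd om)))"
  have w: "is_path v D r w" "phead w = i" "pdiv w = (\<lambda>_. m)" "a \<notin> set (snd w)" "ptail w = i"
    using powers[OF om aom ij(1), of m] by (auto simp: w_def ptail_def)
  define g :: "'r qpath \<Rightarrow> 'k" where "g = bvec c - bvec w"
  have "g \<in> J_E TYPE('k) v D r"
    unfolding J_E_def g_def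
  proof (rule ideal_gen.gen)
    have "ptail c = ptail w \<and> phead c = phead w \<and> pdiv c = pdiv w" using c w by simp
    then show "bvec c - bvec w \<in> {bvec p - bvec p' |p p'. is_path v D r p \<and> is_path v D r p' \<and>
        ptail p = ptail p' \<and> phead p = phead p' \<and> pdiv p = pdiv p'}"
      using c(1) w(1) by blast
  qed
  then have "g \<in> J_W TYPE('k) v D r" using cons by (simp add: consistent_def)
  then have "invar a g" unfolding J_W_def by (rule invar_ideal[OF H])
  then have z: "ssum (Rst a i i) g = 0" by (simp add: invar_def)
  have cw: "c \<noteq> w" using c w by auto
  have "{x. g x \<noteq> 0 \<and> Rst a i i x} = {w}"
    using cw c w by (auto simp: g_def bvec_def Rst_def)
  then have "ssum (Rst a i i) g = g w" by (simp add: ssum_def)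
  also have "\<dots> = -1" using cw by (simp add: g_def bvec_def)
  finally show False using z by simp
qed

end
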